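(* Let $N\ge 2$, $n\ge1$, and let $\rho$ be a density matrix on $\mathbb{C}^N$. Then, computing $\mathcal{C}$ on the $N^{2n}$-dimensional space $(\mathbb{C}^N)^{\otimes 2n}$, $$\mathcal{C}(\rho^{\otimes n}\otimes\mathcal{I}^{\otimes n})\le n\,\frac{S(\rho)+\log_2 N}{2\log_2 N}\,D(\rho,\mathcal{I})= n\left(\frac{\mathcal{C}(\rho)}{2}+\frac{D(\rho,\mathcal{I})}{2}\right)\le n\left(\frac{\mathcal{C}(\rho)}{2}+\frac12\right).$$
   Context: For a density matrix $\rho$ (positive semidefinite, trace one) on an $N$-dimensional Hilbert space, $\mathcal{I}=\mathbb{I}/N$ is the normalized maximally mixed state. The von Neumann entropy is $S(\rho)=-\mathrm{Tr}[\rho\log_2\rho]$, and $D(\rho,\sigma)=\tfrac12\|\rho-\sigma\|_1$ is the trace distance. The Quantum Statistical Complexity Measure is $\mathcal{C}(\rho)=\frac{1}{\log_2 M}\,S(\rho)\,D(\rho,\mathbb{I}/M)$ for a state on an $M$-dimensional space. *)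

theory Defs
  imports "Jordan_Normal_Form.Char_Poly" "Jordan_Normal_Form.Schur_Decomposition"
begin

(* The order is irrelevant for
   everything below, since only symmetric sums over this list are used. *)
definition eigvals :: "complex mat \<Rightarrow> complex list" where
  "eigvals A = (SOME as. char_poly A = (\<Prod>a\<leftarrow>as. [:- a, 1:]) \<and> length as = dim_row A)"

definition mat_trace :: "complex mat \<Rightarrow> complex" where
  "mat_trace A = (\<Sum>i<dim_row A. A $$ (i, i))"

definition density_matrix :: "nat \<Rightarrow> complex mat \<Rightarrow> bool" where
  "density_matrix N \<rho> \<longleftrightarrow>
     \<rho> \<in> carrier_mat N N \<and>
     mat_adjoint \<rho> = \<rho> \<and>
     (\<forall>v \<in> carrier_vec N. Im (conjugate v \<bullet> (\<rho> *\<^sub>v v)) = 0 \<and> 0 \<le> Re (conjugate v \<bullet> (\<rho> *\<^sub>v v))) \<and>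
     mat_trace \<rho> = 1"

definition max_mixed :: "nat \<Rightarrow> complex mat" where
  "max_mixed N = (1 / of_nat N) \<cdot>\<^sub>m 1\<^sub>m N"

(* von Neumann entropy S(rho) = - Tr[rho log2 rho] = - sum_i l_i log2 l_i over the
   eigenvalues l_i of rho (with 0 log 0 = 0) *)
definition vn_entropy :: "complex mat \<Rightarrow> real" where
  "vn_entropy \<rho> = - (\<Sum>l\<leftarrow>eigvals \<rho>. (if Re l = 0 then 0 else Re l * log 2 (Re l)))"

(* trace norm ||A||_1 = Tr sqrt(A^* A) = sum of singular values of A *)
definition trace_norm :: "complex mat \<Rightarrow> real" where
  "trace_norm A = (\<Sum>m\<leftarrow>eigvals (mat_adjoint A * A). sqrt (Re m))"

definition trace_dist :: "complex mat \<Rightarrow> complex mat \<Rightarrow> real" where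
  "trace_dist \<rho> \<sigma> = trace_norm (\<rho> - \<sigma>) / 2"

definition qsc :: "complex mat \<Rightarrow> real" where
  "qsc \<rho> = (let M = dim_row \<rho> in
      vn_entropy \<rho> * trace_dist \<rho> (max_mixed M) / log 2 (real M))"

definition kron :: "complex mat \<Rightarrow> complex mat \<Rightarrow> complex mat" where
  "kron A B = mat (dim_row A * dim_row B) (dim_col A * dim_col B)
     (\<lambda>(i, j). A $$ (i div dim_row B, j div dim_col B) * B $$ (i mod dim_row B, j mod dim_col B))"

fun kron_pow :: "complex mat \<Rightarrow> nat \<Rightarrow> complex mat" where
  "kron_pow A 0 = 1\<^sub>m 1"
| "kron_pow A (Suc n) = kron A (kron_pow A n)"

end

theory Submission imports Defs begin
lemma adj_dim[simp]: "dim_row (mat_adjoint A) = dim_col A" "dim_col (mat_adjoint A) = dim_row A"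
  unfolding mat_adjoint_def by auto
lemma adj_idx[simp]: "i < dim_col A \<Longrightarrow> j < dim_row A \<Longrightarrow> mat_adjoint A $$ (i,j) = conjugate (A $$ (j,i))"
  unfolding mat_adjoint_def by (simp add: mat_of_rows_index)

lemma kron_dim[simp]: "dim_row (kron A B) = dim_row A * dim_row B" "dim_col (kron A B) = dim_col A * dim_col B"
  unfolding kron_def by auto

lemma kron_idx: "i < dim_row A * dim_row B \<Longrightarrow> j < dim_col A * dim_col B \<Longrightarrow>
  kron A B $$ (i,j) = A $$ (i div dim_row B, j div dim_col B) * B $$ (i mod dim_row B, j mod dim_col B)"
  unfolding kron_def by auto

lemma sum_add_split: "(\<Sum>k<m+(b::nat). f k) = (\<Sum>k<m. f k) + (\<Sum>y<b. f (m+y))"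
  by (induct b) (auto simp: add.assoc)

lemma sum_split_prod: "(\<Sum>k<(a::nat)*b. f k) = (\<Sum>x<a. \<Sum>y<b. f (x*b+y))"
proof (induct a)
  case (Suc a)
  have "(\<Sum>k<Suc a*b. f k) = (\<Sum>k<a*b + b. f k)" by (simp add: add.commute)
  also have "\<dots> = (\<Sum>k<a*b. f k) + (\<Sum>y<b. f (a*b+y))" by (rule sum_add_split)
  finally show ?case using Suc by simp
qed simp

lemma div_lt: "i < a * (b::nat) \<Longrightarrow> i div b < a"
  by (simp add: less_mult_imp_div_less)
lemma mod_lt: "i < a * (b::nat) \<Longrightarrow> i mod b < b"
  by (metis mod_less_divisor mult_0_right not_less0 gr0I)

lemma mat_mult_idx: "i < dim_row A \<Longrightarrow> j < dim_col C \<Longrightarrow> dim_col A = dim_row C \<Longrightarrow>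
   (A * C) $$ (i,j) = (\<Sum>x<dim_col A. A $$ (i,x) * C $$ (x,j))"
  by (simp add: scalar_prod_def lessThan_atLeast0)

lemma kron_mult: assumes "dim_col A = dim_row C" "dim_col B = dim_row D"
  shows "kron A B * kron C D = kron (A*C) (B*D)"
proof (rule eq_matI)
  fix i j assume i: "i < dim_row (kron (A*C) (B*D))" and j: "j < dim_col (kron (A*C) (B*D))"
  let ?ra = "dim_row A" and ?rb = "dim_row B" and ?cc = "dim_col C" and ?cd = "dim_col D"
  let ?ca = "dim_col A" and ?cb = "dim_col B"
  have i': "i < ?ra * ?rb" and j': "j < ?cc * ?cd" using i j by auto
  have "(kron A B * kron C D) $$ (i,j) = (\<Sum>k<?ca*?cb. kron A B $$ (i,k) * kron C D $$ (k,j))"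
    by (subst mat_mult_idx) (use i' j' assms in auto)
  also have "\<dots> = (\<Sum>x<?ca. \<Sum>y<?cb. kron A B $$ (i,x*?cb+y) * kron C D $$ (x*?cb+y,j))"
    by (rule sum_split_prod)
  also have "\<dots> = (\<Sum>x<?ca. \<Sum>y<?cb. (A $$ (i div ?rb, x) * C $$ (x, j div ?cd)) *
       (B $$ (i mod ?rb, y) * D $$ (y, j mod ?cd)))"
  proof (intro sum.cong refl)
    fix x y assume x: "x \<in> {..<?ca}" and y: "y \<in> {..<?cb}"
    have k1: "x*?cb+y < (x+1)*?cb" using y by simp
    have k2: "(x+1)*?cb \<le> ?ca*?cb" using x by (intro mult_le_mono1) simp
    have k: "x*?cb+y < ?ca * ?cb" using k1 k2 by linarith
    have dv: "(x*?cb+y) div ?cb = x" "(x*?cb+y) mod ?cb = y" "y mod ?cb = y" using y by auto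
    show "kron A B $$ (i,x*?cb+y) * kron C D $$ (x*?cb+y,j) = (A $$ (i div ?rb, x) * C $$ (x, j div ?cd)) *
       (B $$ (i mod ?rb, y) * D $$ (y, j mod ?cd))"
      using k i' j' by (simp add: kron_idx assms(1)[symmetric] assms(2)[symmetric] dv mult_ac)
  qed
  also have "\<dots> = (\<Sum>x<?ca. A $$ (i div ?rb, x) * C $$ (x, j div ?cd)) * (\<Sum>y<?cb. B $$ (i mod ?rb, y) * D $$ (y, j mod ?cd))"
    by (simp add: sum_product)
  also have "\<dots> = kron (A*C) (B*D) $$ (i,j)"
    using i' j' assms by (simp add: kron_idx div_lt mod_lt scalar_prod_def lessThan_atLeast0)
  finally show "(kron A B * kron C D) $$ (i,j) = kron (A*C) (B*D) $$ (i,j)" .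
qed (use assms in auto)

lemma kron_carrier[simp]: "A \<in> carrier_mat n n \<Longrightarrow> B \<in> carrier_mat m m \<Longrightarrow> kron A B \<in> carrier_mat (n*m) (n*m)"
  by auto

lemma kron_one: "kron (1\<^sub>m n) (1\<^sub>m m) = 1\<^sub>m (n*m)"
proof (rule eq_matI)
  fix i j assume "i < dim_row (1\<^sub>m (n*m))" "j < dim_col (1\<^sub>m (n*m))"
  hence ij: "i < n*m" "j < n*m" by auto
  show "kron (1\<^sub>m n) (1\<^sub>m m) $$ (i, j) = 1\<^sub>m (n*m) $$ (i, j)"
  proof (cases "i = j")
    case False
    have "i div m \<noteq> j div m \<or> i mod m \<noteq> j mod m"
    proof (rule ccontr)
      assume "\<not> ?thesis"
      hence "i div m * m + i mod m = j div m * m + j mod m" by simp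
      thus False using False by simp
    qed
    then show ?thesis using ij False by (auto simp: kron_idx div_lt mod_lt)
  qed (use ij in \<open>simp add: kron_idx div_lt mod_lt\<close>)
qed auto

lemma kron_ut: assumes "T1 \<in> carrier_mat n n" "T2 \<in> carrier_mat m m" "upper_triangular T1" "upper_triangular T2"
  shows "upper_triangular (kron T1 T2)"
  unfolding upper_triangular_def
proof (intro allI impI)
  fix i j assume i: "i < dim_row (kron T1 T2)" and ji: "j < i"
  have i': "i < n*m" using i assms by auto
  have j': "j < n*m" using i' ji by auto
  have le: "j div m \<le> i div m" using ji by (simp add: div_le_mono)
  show "kron T1 T2 $$ (i,j) = 0"
  proof (cases "j div m < i div m")
    case True
    then show ?thesis using i' j' assms by (simp add: kron_idx div_lt upper_triangularD)
  next
    case False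
    hence eq: "j div m = i div m" using le by auto
    have "j mod m < i mod m"
    proof (rule ccontr)
      assume "\<not> j mod m < i mod m"
      hence "i mod m \<le> j mod m" by auto
      moreover have "j div m * m = i div m * m" using eq by simp
      ultimately have "i \<le> j" using div_mult_mod_eq[of i m] div_mult_mod_eq[of j m] by linarith
      thus False using ji by simp
    qed
    then show ?thesis using i' j' assms by (simp add: kron_idx mod_lt upper_triangularD)
  qed
qed

lemma map_upt_mult: "map f [0..<a*b] = concat (map (\<lambda>x. map (\<lambda>y. f (x*b+y)) [0..<b]) [0..<(a::nat)])"
proof (induct a)
  case (Suc a)
  have e: "Suc a * b = a*b + b" by simp
  have "[0..<Suc a * b] = [0..<a*b] @ [a*b..<a*b+b]"
    unfolding e by (rule upt_add_eq_append) simp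
  moreover have "map f [a*b..<a*b+b] = map (\<lambda>y. f (a*b+y)) [0..<b]"
    by (rule nth_equalityI) auto
  ultimately show ?case using Suc by simp
qed simp

definition kmul :: "complex list \<Rightarrow> complex list \<Rightarrow> complex list" where
  "kmul xs ys = concat (map (\<lambda>d. map (\<lambda>e. d*e) ys) xs)"

lemma kron_diag: assumes "T1 \<in> carrier_mat n n" "T2 \<in> carrier_mat m m"
  shows "diag_mat (kron T1 T2) = kmul (diag_mat T1) (diag_mat T2)"
proof -
  have "diag_mat (kron T1 T2) = map (\<lambda>i. kron T1 T2 $$ (i,i)) [0..<n*m]"
    using assms by (simp add: diag_mat_def)
  also have "\<dots> = concat (map (\<lambda>x. map (\<lambda>y. kron T1 T2 $$ (x*m+y,x*m+y)) [0..<m]) [0..<n])"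
    by (rule map_upt_mult)
  also have "\<dots> = concat (map (\<lambda>x. map (\<lambda>y. T1 $$ (x,x) * T2 $$ (y,y)) [0..<m]) [0..<n])"
  proof (intro arg_cong[where f=concat] map_cong refl)
    fix x y assume x: "x \<in> set [0..<n]" and y: "y \<in> set [0..<m]"
    have k1: "x*m+y < (x+1)*m" using y by simp
    have k2: "(x+1)*m \<le> n*m" using x by (intro mult_le_mono1) simp
    have k: "x*m+y < n * m" using k1 k2 by linarith
    have dv: "(x*m+y) div m = x" "(x*m+y) mod m = y" "y mod m = y" using y by auto
    show "kron T1 T2 $$ (x*m+y,x*m+y) = T1 $$ (x,x) * T2 $$ (y,y)"
      using k assms by (simp add: kron_idx dv)
  qed
  also have "\<dots> = kmul (diag_mat T1) (diag_mat T2)"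
    using assms by (simp add: kmul_def diag_mat_def map_concat comp_def)
  finally show ?thesis .
qed

definition tri_rep :: "complex mat \<Rightarrow> complex list \<Rightarrow> bool" where
  "tri_rep A ds \<longleftrightarrow> (\<exists>T P Q. similar_mat_wit A T P Q \<and> upper_triangular T \<and> diag_mat T = ds)"

lemma tri_rep_kron: assumes A: "tri_rep A ds" and B: "tri_rep B es"
  shows "tri_rep (kron A B) (kmul ds es)"
proof -
  obtain T1 P1 Q1 where 1: "similar_mat_wit A T1 P1 Q1" "upper_triangular T1" "diag_mat T1 = ds"
    using A unfolding tri_rep_def by blast
  obtain T2 P2 Q2 where 2: "similar_mat_wit B T2 P2 Q2" "upper_triangular T2" "diag_mat T2 = es"
    using B unfolding tri_rep_def by blast
  define n where "n = dim_row A"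
  define m where "m = dim_row B"
  note w1 = similar_mat_witD[OF n_def 1(1)]
  note w2 = similar_mat_witD[OF m_def 2(1)]
  have "similar_mat_wit (kron A B) (kron T1 T2) (kron P1 P2) (kron Q1 Q2)"
  proof (rule similar_mat_witI[of _ _ "n*m"])
    show "kron P1 P2 * kron Q1 Q2 = 1\<^sub>m (n * m)"
      using w1 w2 by (simp add: kron_mult kron_one)
    show "kron Q1 Q2 * kron P1 P2 = 1\<^sub>m (n * m)"
      using w1 w2 by (simp add: kron_mult kron_one)
    have "kron A B = kron (P1 * T1 * Q1) (P2 * T2 * Q2)" using w1 w2 by simp
    also have "\<dots> = kron (P1 * T1) (P2 * T2) * kron Q1 Q2"
      using w1 w2 by (simp add: kron_mult)
    also have "\<dots> = kron P1 P2 * kron T1 T2 * kron Q1 Q2"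
      using w1 w2 by (simp add: kron_mult)
    finally show "kron A B = kron P1 P2 * kron T1 T2 * kron Q1 Q2" .
  qed (use w1 w2 in auto)
  moreover have "upper_triangular (kron T1 T2)" using kron_ut w1 w2 1 2 by blast
  moreover have "diag_mat (kron T1 T2) = kmul ds es" using kron_diag w1 w2 1 2 by metis
  ultimately show ?thesis unfolding tri_rep_def by blast
qed

lemma prod_list_mset_eq: "mset xs = mset ys \<Longrightarrow> prod_list (map (f::_\<Rightarrow>'b::comm_monoid_mult) xs) = prod_list (map f ys)"
  by (metis mset_map prod_mset_prod_list)

lemma sum_list_mset_eq: "mset xs = mset ys \<Longrightarrow> sum_list (map (f::_\<Rightarrow>'b::comm_monoid_add) xs) = sum_list (map f ys)"
  by (metis mset_map sum_mset_sum_list)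

lemma deg_lin: "degree (\<Prod>a\<leftarrow>as. [:- (a::complex), 1:]) = length as"
proof (induct as)
  case (Cons a as)
  have "(\<Prod>a\<leftarrow>as. [:- (a::complex), 1:]) \<noteq> 0" by (auto simp: prod_list_zero_iff)
  then have "degree ([:- a, 1:] * (\<Prod>a\<leftarrow>as. [:- (a::complex), 1:])) = 1 + length as"
    using Cons by (subst degree_mult_eq) auto
  then show ?case by simp
qed simp

lemma lin_prod_mset: "(\<Prod>a\<leftarrow>xs. [:- (a::complex), 1:]) = (\<Prod>a\<leftarrow>ys. [:- a, 1:]) \<Longrightarrow> mset xs = mset ys"
proof (induct xs arbitrary: ys)
  case Nil
  then have "length ys = 0" using deg_lin[of ys] by simp
  then show ?case by simp
next
  case (Cons x xs ys)
  have "poly (\<Prod>a\<leftarrow>ys. [:- a, 1:]) x = 0" unfolding Cons(2)[symmetric] by simp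
  hence "x \<in> set ys" by (auto simp: poly_prod_list prod_list_zero_iff)
  hence m: "mset ys = mset (x # remove1 x ys)" by simp
  have "[:- x, 1:] * (\<Prod>a\<leftarrow>xs. [:- a, 1:]) = [:- x, 1:] * (\<Prod>a\<leftarrow>remove1 x ys. [:- a, 1:])"
    using Cons(2) prod_list_mset_eq[OF m, of "\<lambda>a. [:- a, 1:]"] by simp
  moreover have nz: "[:- x, 1:] \<noteq> (0::complex poly)" by simp
  ultimately have "(\<Prod>a\<leftarrow>xs. [:- a, 1:]) = (\<Prod>a\<leftarrow>remove1 x ys. [:- a, 1:])"
    using mult_left_cancel[OF nz] by blast
  from Cons(1)[OF this] have "mset (x # xs) = mset (x # remove1 x ys)" by (simp del: mset_remove1)
  then show ?case by (rule trans[OF _ m[symmetric]])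
qed

lemma tri_rep_char: assumes "tri_rep A ds"
  shows "char_poly A = (\<Prod>a\<leftarrow>ds. [:- a, 1:])" "length ds = dim_row A" "A \<in> carrier_mat (dim_row A) (dim_row A)"
proof -
  obtain T P Q where w: "similar_mat_wit A T P Q" "upper_triangular T" "diag_mat T = ds"
    using assms unfolding tri_rep_def by blast
  note ww = similar_mat_witD[OF refl w(1)]
  have "similar_mat A T" using w(1) unfolding similar_mat_def by blast
  hence "char_poly A = char_poly T" by (rule char_poly_similar)
  also have "\<dots> = (\<Prod>a\<leftarrow>ds. [:- a, 1:])" using char_poly_upper_triangular[OF ww(5) w(2)] w(3) by simp
  finally show "char_poly A = (\<Prod>a\<leftarrow>ds. [:- a, 1:])" .
  show "length ds = dim_row A" using w(3) ww(5) by (auto simp: diag_mat_def)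
  show "A \<in> carrier_mat (dim_row A) (dim_row A)" using ww(4) .
qed

lemma eigvals_tri: assumes "tri_rep A ds" shows "mset (eigvals A) = mset ds"
proof -
  note c = tri_rep_char[OF assms]
  have "\<exists>as. char_poly A = (\<Prod>a\<leftarrow>as. [:- a, 1:]) \<and> length as = dim_row A" using c by blast
  hence "char_poly A = (\<Prod>a\<leftarrow>eigvals A. [:- a, 1:]) \<and> length (eigvals A) = dim_row A"
    unfolding eigvals_def by (rule someI_ex)
  then show ?thesis using c(1) lin_prod_mset by metis
qed

lemma eigvals_sum: fixes f :: "complex \<Rightarrow> 'b::comm_monoid_add" assumes "tri_rep A ds" shows "sum_list (map f (eigvals A)) = sum_list (map f ds)"
  by (rule sum_list_mset_eq[OF eigvals_tri[OF assms]])

lemma tri_rep_exists: assumes A: "A \<in> carrier_mat n n" shows "\<exists>ds. tri_rep A ds"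
proof -
  obtain es where es: "char_poly A = (\<Prod>a\<leftarrow>es. [:- a, 1:])" using char_poly_factorized[OF A] by blast
  obtain B P Q where s: "schur_decomposition A es = (B,P,Q)" by (cases "schur_decomposition A es") auto
  from schur_decomposition[OF A es s] show ?thesis unfolding tri_rep_def by blast
qed

lemma diag_mat_minus: fixes T :: "complex mat" assumes "T \<in> carrier_mat n n"
  shows "diag_mat (T - c \<cdot>\<^sub>m 1\<^sub>m n) = map (\<lambda>d. d - c) (diag_mat T)"
  using assms by (intro nth_equalityI) (auto simp: diag_mat_def)

lemma tri_rep_shift: assumes "tri_rep A ds"
  shows "tri_rep (A - c \<cdot>\<^sub>m 1\<^sub>m (dim_row A)) (map (\<lambda>d. d - c) ds)"
proof -
  obtain T P Q where w: "similar_mat_wit A T P Q" "upper_triangular T" "diag_mat T = ds"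
    using assms unfolding tri_rep_def by blast
  define n where "n = dim_row A"
  note ww = similar_mat_witD[OF n_def w(1)]
  have cT: "T \<in> carrier_mat n n" and cP: "P \<in> carrier_mat n n" and cQ: "Q \<in> carrier_mat n n"
    and PQ: "P * Q = 1\<^sub>m n" and eA: "A = P * T * Q" using ww by auto
  have c1: "c \<cdot>\<^sub>m 1\<^sub>m n \<in> carrier_mat n n" by simp
  have "P * (T - c \<cdot>\<^sub>m 1\<^sub>m n) = P * T - P * (c \<cdot>\<^sub>m 1\<^sub>m n)"
    by (rule mult_minus_distrib_mat[OF cP cT c1])
  also have "P * (c \<cdot>\<^sub>m 1\<^sub>m n) = c \<cdot>\<^sub>m (P * 1\<^sub>m n)"
    by (rule mult_smult_distrib[OF cP one_carrier_mat])
  also have "P * 1\<^sub>m n = P" using cP by simp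
  finally have "P * (T - c \<cdot>\<^sub>m 1\<^sub>m n) * Q = (P * T - c \<cdot>\<^sub>m P) * Q" by simp
  also have "\<dots> = P * T * Q - (c \<cdot>\<^sub>m P) * Q"
    by (rule minus_mult_distrib_mat[of _ n n]) (use cP cT cQ in auto)
  also have "(c \<cdot>\<^sub>m P) * Q = c \<cdot>\<^sub>m (P * Q)" by (rule mult_smult_assoc_mat[OF cP cQ])
  also have "P * T * Q - c \<cdot>\<^sub>m (P * Q) = A - c \<cdot>\<^sub>m 1\<^sub>m n" using eA PQ by simp
  finally have e: "A - c \<cdot>\<^sub>m 1\<^sub>m n = P * (T - c \<cdot>\<^sub>m 1\<^sub>m n) * Q" by simp
  have "similar_mat_wit (A - c \<cdot>\<^sub>m 1\<^sub>m n) (T - c \<cdot>\<^sub>m 1\<^sub>m n) P Q"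
    by (rule similar_mat_witI[of _ _ n]) (use ww e in auto)
  moreover have "upper_triangular (T - c \<cdot>\<^sub>m 1\<^sub>m n)"
    using w(2) ww unfolding upper_triangular_def by auto
  moreover have "diag_mat (T - c \<cdot>\<^sub>m 1\<^sub>m n) = map (\<lambda>d. d - c) ds"
    using diag_mat_minus[OF ww(5)] w(3) by simp
  ultimately show ?thesis unfolding tri_rep_def n_def by blast
qed

lemma ut_sq: assumes T: "T \<in> carrier_mat n n" and ut: "upper_triangular T"
  shows "upper_triangular (T * T)" "diag_mat (T * T) = map (\<lambda>d. d*d) (diag_mat T)"
proof -
  show "upper_triangular (T * T)" unfolding upper_triangular_def
  proof (intro allI impI)
    fix i j assume i: "i < dim_row (T*T)" and ji: "j < i"
    have "(T*T) $$ (i,j) = (\<Sum>k<n. T $$ (i,k) * T $$ (k,j))"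
      using i ji T by (subst mat_mult_idx) auto
    also have "\<dots> = 0"
    proof (rule sum.neutral, intro ballI)
      fix k assume k: "k \<in> {..<n}"
      show "T $$ (i,k) * T $$ (k,j) = 0"
      proof (cases "k < i")
        case True then show ?thesis using i T ut by (auto simp: upper_triangularD)
      next
        case False then show ?thesis using k ji T ut by (auto simp: upper_triangularD)
      qed
    qed
    finally show "(T*T) $$ (i,j) = 0" .
  qed
  show "diag_mat (T * T) = map (\<lambda>d. d*d) (diag_mat T)"
  proof (rule nth_equalityI)
    show "length (diag_mat (T * T)) = length (map (\<lambda>d. d*d) (diag_mat T))" using T by (simp add: diag_mat_def)
    fix i assume "i < length (diag_mat (T * T))"
    hence i: "i < n" using T by (simp add: diag_mat_def)
    have "(T*T) $$ (i,i) = (\<Sum>k<n. T $$ (i,k) * T $$ (k,i))"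
      using i T by (subst mat_mult_idx) auto
    also have "\<dots> = (\<Sum>k<n. if k = i then T $$ (i,i) * T $$ (i,i) else 0)"
    proof (rule sum.cong[OF refl])
      fix k assume k: "k \<in> {..<n}"
      show "T $$ (i,k) * T $$ (k,i) = (if k = i then T $$ (i,i) * T $$ (i,i) else 0)"
        using k i T ut by (cases "k < i") (auto simp: upper_triangularD)
    qed
    also have "\<dots> = T $$ (i,i) * T $$ (i,i)" using i by simp
    finally show "diag_mat (T * T) ! i = map (\<lambda>d. d*d) (diag_mat T) ! i"
      using i T by (simp add: diag_mat_def)
  qed
qed

lemma tri_rep_sq: assumes "tri_rep A ds" shows "tri_rep (A * A) (map (\<lambda>d. d*d) ds)"
proof -
  obtain T P Q where w: "similar_mat_wit A T P Q" "upper_triangular T" "diag_mat T = ds"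
    using assms unfolding tri_rep_def by blast
  define n where "n = dim_row A"
  note ww = similar_mat_witD[OF n_def w(1)]
  have p: "A ^\<^sub>m 2 = P * T ^\<^sub>m 2 * Q" by (rule similar_mat_wit_pow_id[OF w(1)])
  have a2: "A ^\<^sub>m 2 = A * A" using ww by (simp add: numeral_2_eq_2)
  have t2: "T ^\<^sub>m 2 = T * T" using ww by (simp add: numeral_2_eq_2)
  have "similar_mat_wit (A * A) (T * T) P Q"
    by (rule similar_mat_witI[of _ _ n]) (use ww p a2 t2 in auto)
  then show ?thesis using ut_sq[OF ww(5) w(2)] w(3) unfolding tri_rep_def by blast
qed


lemma adj_kron: "mat_adjoint (kron A B) = kron (mat_adjoint A) (mat_adjoint B)"
proof (rule eq_matI)
  fix i j assume i: "i < dim_row (kron (mat_adjoint A) (mat_adjoint B))" and j: "j < dim_col (kron (mat_adjoint A) (mat_adjoint B))"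
  hence i': "i < dim_col A * dim_col B" and j': "j < dim_row A * dim_row B" by auto
  show "mat_adjoint (kron A B) $$ (i, j) = kron (mat_adjoint A) (mat_adjoint B) $$ (i, j)"
    using i' j' by (simp add: kron_idx div_lt mod_lt)
qed auto

lemma adj_one: "mat_adjoint (1\<^sub>m n) = (1\<^sub>m n :: complex mat)"
  by (rule eq_matI) auto

lemma adj_kron_pow: "mat_adjoint A = A \<Longrightarrow> mat_adjoint (kron_pow A k) = kron_pow A k"
  by (induct k) (auto simp: adj_kron adj_one)

lemma adj_max_mixed: "mat_adjoint (max_mixed N) = max_mixed N"
  unfolding max_mixed_def by (rule eq_matI) auto

fun kp :: "complex list \<Rightarrow> nat \<Rightarrow> complex list" where
  "kp ds 0 = [1]"
| "kp ds (Suc k) = kmul ds (kp ds k)"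

lemma tri_rep_one: "tri_rep (1\<^sub>m 1) [1]"
proof -
  have "similar_mat_wit (1\<^sub>m 1) (1\<^sub>m 1) (1\<^sub>m 1) (1\<^sub>m (1::nat) :: complex mat)"
    by (rule similar_mat_witI[of _ _ 1]) auto
  moreover have "upper_triangular (1\<^sub>m 1 :: complex mat)" unfolding upper_triangular_def by auto
  moreover have "diag_mat (1\<^sub>m 1 :: complex mat) = [1]" by (simp add: diag_mat_def)
  ultimately show ?thesis unfolding tri_rep_def by blast
qed

lemma tri_rep_kp: assumes a: "tri_rep A ds" shows "tri_rep (kron_pow A k) (kp ds k)"
proof (induct k)
  case 0 show ?case unfolding kron_pow.simps kp.simps by (rule tri_rep_one)
next
  case (Suc k) then show ?case unfolding kron_pow.simps kp.simps by (rule tri_rep_kron[OF a])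
qed

lemma tri_rep_mm: "tri_rep (max_mixed N) (replicate N (1 / of_nat N))"
proof -
  have c: "max_mixed N \<in> carrier_mat N N" unfolding max_mixed_def by simp
  have "similar_mat_wit (max_mixed N) (max_mixed N) (1\<^sub>m N) (1\<^sub>m N)"
    by (rule similar_mat_witI[of _ _ N]) (use c in auto)
  moreover have "upper_triangular (max_mixed N)" unfolding upper_triangular_def max_mixed_def by auto
  moreover have "diag_mat (max_mixed N) = replicate N (1 / of_nat N)"
    by (rule nth_equalityI) (auto simp: diag_mat_def max_mixed_def)
  ultimately show ?thesis unfolding tri_rep_def by blast
qed

lemma dens_eig: assumes dm: "density_matrix N \<rho>" and tr: "tri_rep \<rho> ds" and d: "d \<in> set ds"
  shows "Im d = 0 \<and> 0 \<le> Re d"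
proof -
  have car: "\<rho> \<in> carrier_mat N N" using dm unfolding density_matrix_def by auto
  have "poly (char_poly \<rho>) d = 0" using tri_rep_char(1)[OF tr] d
    by (auto simp: poly_prod_list prod_list_zero_iff)
  hence "eigenvalue \<rho> d" using eigenvalue_root_char_poly[OF car] by simp
  then obtain v where v: "v \<in> carrier_vec N" "v \<noteq> 0\<^sub>v N" "\<rho> *\<^sub>v v = d \<cdot>\<^sub>v v"
    unfolding eigenvalue_def eigenvector_def using car by auto
  have h: "Im (conjugate v \<bullet> (\<rho> *\<^sub>v v)) = 0 \<and> 0 \<le> Re (conjugate v \<bullet> (\<rho> *\<^sub>v v))"
    using dm v(1) unfolding density_matrix_def by blast
  define s where "s = conjugate v \<bullet> v"
  have e: "conjugate v \<bullet> (\<rho> *\<^sub>v v) = d * s" unfolding v(3) s_def using v(1) by simp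
  have sv: "v \<bullet>c v = s" unfolding s_def by (rule conjugate_vec_sprod_comm[OF v(1) v(1)])
  have s0: "s \<ge> 0" using conjugate_square_ge_0_vec[of v] sv by simp
  have s1: "s \<noteq> 0" using conjugate_square_eq_0_vec[OF v(1)] v(2) sv by simp
  have ims: "Im s = 0" and res: "Re s > 0" using s0 s1
    by (auto simp: less_eq_complex_def complex_eq_iff)
  have "Im (d * s) = 0" using h e by simp
  hence "Im d * Re s = 0" using ims by simp
  hence "Im d = 0" using res by simp
  moreover have "0 \<le> Re (d * s)" using h e by simp
  hence "0 \<le> Re d * Re s" using ims by simp
  hence "0 \<le> Re d" using res by (simp add: zero_le_mult_iff)
  ultimately show ?thesis by simp
qed

lemma trace_comm: assumes "A \<in> carrier_mat n n" "B \<in> carrier_mat n n"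
  shows "mat_trace (A * B) = mat_trace (B * A)"
proof -
  have "mat_trace (A * B) = (\<Sum>i<n. \<Sum>k<n. A $$ (i,k) * B $$ (k,i))"
    unfolding mat_trace_def using assms by (intro sum.cong) (auto simp: scalar_prod_def lessThan_atLeast0)
  also have "\<dots> = (\<Sum>k<n. \<Sum>i<n. B $$ (k,i) * A $$ (i,k))"
    by (subst sum.swap) (simp add: mult.commute)
  also have "\<dots> = mat_trace (B * A)"
    unfolding mat_trace_def using assms by (intro sum.cong) (auto simp: scalar_prod_def lessThan_atLeast0)
  finally show ?thesis .
qed

lemma sum_upt_list: "(\<Sum>i<n. f i) = sum_list (map f [0..<n])"
  by (induct n) auto

lemma trace_tri: assumes "tri_rep A ds" shows "mat_trace A = sum_list ds"
proof -
  obtain T P Q where w: "similar_mat_wit A T P Q" "upper_triangular T" "diag_mat T = ds"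
    using assms unfolding tri_rep_def by blast
  define n where "n = dim_row A"
  note ww = similar_mat_witD[OF n_def w(1)]
  have "mat_trace A = mat_trace (P * T * Q)" using ww by simp
  also have "\<dots> = mat_trace (Q * (P * T))" using ww by (intro trace_comm[of _ n]) auto
  also have "Q * (P * T) = (Q * P) * T" using ww by (simp add: assoc_mult_mat[symmetric, of Q n n P n T n])
  also have "\<dots> = T" using ww by simp
  also have "mat_trace T = sum_list (diag_mat T)"
    using ww unfolding mat_trace_def diag_mat_def by (simp add: sum_upt_list)
  finally show ?thesis using w(3) by simp
qed

lemma sum_list_Re: "sum_list (map Re xs) = Re (sum_list xs)"
  by (induct xs) auto

definition hf :: "real \<Rightarrow> real" where "hf x = (if x = 0 then 0 else x * log 2 x)"
definition Hs :: "complex list \<Rightarrow> real" where "Hs xs = sum_list (map (\<lambda>l. hf (Re l)) xs)"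
definition Ts :: "complex list \<Rightarrow> real \<Rightarrow> real" where "Ts xs c = sum_list (map (\<lambda>l. \<bar>Re l - c\<bar>) xs)"
definition prob :: "complex list \<Rightarrow> bool" where
  "prob xs \<longleftrightarrow> (\<forall>x\<in>set xs. Im x = 0 \<and> 0 \<le> Re x) \<and> sum_list (map Re xs) = 1"

lemma sum_kmul: "sum_list (map f (kmul xs ys)) = sum_list (map (\<lambda>x. sum_list (map (\<lambda>y. f (x*y)) ys)) xs)"
  by (induct xs) (auto simp: kmul_def comp_def)

lemma set_kmul: "z \<in> set (kmul xs ys) \<Longrightarrow> \<exists>x\<in>set xs. \<exists>y\<in>set ys. z = x*y"
  by (auto simp: kmul_def)

lemma len_kmul: "length (kmul xs ys) = length xs * length ys"
  by (induct xs) (auto simp: kmul_def)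

lemma sum_list_cong': "(\<And>x. x \<in> set xs \<Longrightarrow> f x = g x) \<Longrightarrow> sum_list (map f xs) = sum_list (map g xs)"
  by (metis map_cong)

lemma prob_kmul: assumes px: "prob xs" and py: "prob ys" shows "prob (kmul xs ys)"
proof -
  have "\<forall>z\<in>set (kmul xs ys). Im z = 0 \<and> 0 \<le> Re z"
  proof
    fix z assume "z \<in> set (kmul xs ys)"
    then obtain x y where "x \<in> set xs" "y \<in> set ys" "z = x*y" using set_kmul by blast
    then show "Im z = 0 \<and> 0 \<le> Re z" using px py unfolding prob_def by auto
  qed
  moreover have "sum_list (map Re (kmul xs ys)) = 1"
  proof -
    have "sum_list (map Re (kmul xs ys)) = sum_list (map (\<lambda>x. sum_list (map (\<lambda>y. Re (x*y)) ys)) xs)"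
      by (rule sum_kmul)
    also have "\<dots> = sum_list (map (\<lambda>x. Re x * sum_list (map Re ys)) xs)"
    proof (rule sum_list_cong')
      fix x assume x: "x \<in> set xs"
      have "sum_list (map (\<lambda>y. Re (x*y)) ys) = sum_list (map (\<lambda>y. Re x * Re y) ys)"
        by (rule sum_list_cong') (use x px py in \<open>auto simp: prob_def\<close>)
      also have "\<dots> = Re x * sum_list (map Re ys)" by (rule sum_list_const_mult)
      finally show "sum_list (map (\<lambda>y. Re (x*y)) ys) = Re x * sum_list (map Re ys)" .
    qed
    also have "\<dots> = 1" using px py unfolding prob_def by simp
    finally show ?thesis .
  qed
  ultimately show ?thesis unfolding prob_def by blast
qed

lemma hf_mult: assumes "0 \<le> x" "0 \<le> y" shows "hf (x*y) = x * hf y + y * hf x"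
proof (cases "x = 0 \<or> y = 0")
  case True then show ?thesis by (auto simp: hf_def)
next
  case False
  hence "x > 0" "y > 0" using assms by auto
  then show ?thesis by (simp add: hf_def log_mult algebra_simps)
qed

lemma H_kmul: assumes px: "prob xs" and py: "prob ys" shows "Hs (kmul xs ys) = Hs xs + Hs ys"
proof -
  have "Hs (kmul xs ys) = sum_list (map (\<lambda>x. sum_list (map (\<lambda>y. hf (Re (x*y))) ys)) xs)"
    unfolding Hs_def by (rule sum_kmul)
  also have "\<dots> = sum_list (map (\<lambda>x. Re x * Hs ys + hf (Re x)) xs)"
  proof (rule sum_list_cong')
    fix x assume x: "x \<in> set xs"
    have "sum_list (map (\<lambda>y. hf (Re (x*y))) ys) = sum_list (map (\<lambda>y. Re x * hf (Re y) + hf (Re x) * Re y) ys)"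
      by (rule sum_list_cong') (use x px py in \<open>auto simp: prob_def hf_mult\<close>)
    also have "\<dots> = Re x * Hs ys + hf (Re x) * sum_list (map Re ys)"
      by (simp add: sum_list_addf sum_list_const_mult Hs_def)
    finally show "sum_list (map (\<lambda>y. hf (Re (x*y))) ys) = Re x * Hs ys + hf (Re x)" using py by (simp add: prob_def)
  qed
  also have "\<dots> = Hs ys + Hs xs" using px
    by (simp add: sum_list_addf sum_list_mult_const Hs_def prob_def)
  finally show ?thesis by simp
qed

lemma abs_prod_bound: fixes a b c1 c2 :: real assumes "0 \<le> b" "0 \<le> c1"
  shows "\<bar>a*b - c1*c2\<bar> \<le> \<bar>a - c1\<bar> * b + c1 * \<bar>b - c2\<bar>"
proof -
  have "a*b - c1*c2 = (a - c1) * b + c1 * (b - c2)" by (simp add: algebra_simps)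
  hence "\<bar>a*b - c1*c2\<bar> \<le> \<bar>(a - c1) * b\<bar> + \<bar>c1 * (b - c2)\<bar>" by (metis abs_triangle_ineq)
  thus ?thesis using assms by (simp add: abs_mult)
qed

lemma T_kmul: assumes px: "prob xs" and py: "prob ys" and c1: "0 \<le> c1"
  shows "Ts (kmul xs ys) (c1*c2) \<le> Ts xs c1 + c1 * real (length xs) * Ts ys c2"
proof -
  have "Ts (kmul xs ys) (c1*c2) = sum_list (map (\<lambda>x. sum_list (map (\<lambda>y. \<bar>Re (x*y) - c1*c2\<bar>) ys)) xs)"
    unfolding Ts_def by (rule sum_kmul)
  also have "\<dots> \<le> sum_list (map (\<lambda>x. \<bar>Re x - c1\<bar> + c1 * Ts ys c2) xs)"
  proof (rule sum_list_mono)
    fix x assume x: "x \<in> set xs"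
    have "sum_list (map (\<lambda>y. \<bar>Re (x*y) - c1*c2\<bar>) ys) \<le> sum_list (map (\<lambda>y. \<bar>Re x - c1\<bar> * Re y + c1 * \<bar>Re y - c2\<bar>) ys)"
    proof (rule sum_list_mono)
      fix y assume y: "y \<in> set ys"
      have "Re (x*y) = Re x * Re y" using x y px py by (auto simp: prob_def)
      then show "\<bar>Re (x*y) - c1*c2\<bar> \<le> \<bar>Re x - c1\<bar> * Re y + c1 * \<bar>Re y - c2\<bar>"
        using abs_prod_bound[of "Re y" c1 "Re x" c2] y py c1 by (auto simp: prob_def)
    qed
    also have "\<dots> = \<bar>Re x - c1\<bar> * sum_list (map Re ys) + c1 * Ts ys c2"
      by (simp add: sum_list_addf sum_list_const_mult Ts_def)
    finally show "sum_list (map (\<lambda>y. \<bar>Re (x*y) - c1*c2\<bar>) ys) \<le> \<bar>Re x - c1\<bar> + c1 * Ts ys c2"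
      using py by (simp add: prob_def)
  qed
  also have "\<dots> = Ts xs c1 + c1 * real (length xs) * Ts ys c2"
    by (simp add: sum_list_addf Ts_def sum_list_triv algebra_simps)
  finally show ?thesis .
qed

lemma prob_one: "prob [1]" by (simp add: prob_def)

lemma prob_kp: "prob ds \<Longrightarrow> prob (kp ds k)"
  by (induct k) (auto simp: prob_one prob_kmul)

lemma len_kp: "length (kp ds k) = length ds ^ k"
  by (induct k) (auto simp: len_kmul)

lemma H_kp: assumes p: "prob ds" shows "Hs (kp ds k) = real k * Hs ds"
proof (induct k)
  case 0 show ?case by (simp add: Hs_def hf_def)
next
  case (Suc k)
  have "Hs (kp ds (Suc k)) = Hs ds + Hs (kp ds k)" using H_kmul[OF p prob_kp[OF p]] by simp
  then show ?case using Suc by (simp add: algebra_simps)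
qed

lemma T_kp: assumes p: "prob ds" and l: "length ds = N" and N: "N > 0"
  shows "Ts (kp ds k) ((1 / real N)^k) \<le> real k * Ts ds (1 / real N)"
proof (induct k)
  case 0 then show ?case by (simp add: Ts_def)
next
  case (Suc k)
  have "Ts (kp ds (Suc k)) ((1 / real N)^Suc k) = Ts (kmul ds (kp ds k)) ((1/real N) * (1 / real N)^k)" by simp
  also have "\<dots> \<le> Ts ds (1/real N) + (1/real N) * real (length ds) * Ts (kp ds k) ((1 / real N)^k)"
    by (rule T_kmul[OF p prob_kp[OF p]]) simp
  also have "(1/real N) * real (length ds) = 1" using l N by simp
  finally show ?case using Suc by (simp add: algebra_simps)
qed

lemma kp_const: "x \<in> set (kp (replicate N c) k) \<Longrightarrow> x = c ^ k"
proof (induct k arbitrary: x)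
  case 0 then show ?case by simp
next
  case (Suc k)
  then obtain a b where "a \<in> set (replicate N c)" "b \<in> set (kp (replicate N c) k)" "x = a * b"
    using set_kmul by (metis kp.simps(2))
  then show ?case using Suc by auto
qed

lemma T_const: "(\<And>x. x \<in> set xs \<Longrightarrow> x = complex_of_real r) \<Longrightarrow> Ts xs r = 0"
proof -
  assume a: "\<And>x. x \<in> set xs \<Longrightarrow> x = complex_of_real r"
  have "Ts xs r = sum_list (map (\<lambda>x. 0::real) xs)" unfolding Ts_def
  proof (rule sum_list_cong')
    fix x assume "x \<in> set xs"
    hence "x = complex_of_real r" by (rule a)
    then show "\<bar>Re x - r\<bar> = 0" by simp
  qed
  then show ?thesis by simp
qed

lemma elem_le_sum: "x \<in> set xs \<Longrightarrow> (\<And>y. y \<in> set xs \<Longrightarrow> 0 \<le> f y) \<Longrightarrow> f x \<le> sum_list (map (f::_\<Rightarrow>real) xs)"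
proof (induct xs)
  case (Cons a xs)
  have s0: "0 \<le> sum_list (map f xs)" using Cons(3) by (intro sum_list_nonneg) auto
  have a0: "0 \<le> f a" using Cons(3) by simp
  show ?case
  proof (cases "x = a")
    case True then show ?thesis using s0 by simp
  next
    case False
    then have "x \<in> set xs" using Cons(2) by simp
    then have "f x \<le> sum_list (map f xs)" using Cons(1) Cons(3) by simp
    then show ?thesis using a0 by simp
  qed
qed simp


lemma tn_lemma: assumes tr: "tri_rep A ds" and h: "mat_adjoint A = A" and re: "\<And>d. d \<in> set ds \<Longrightarrow> Im d = 0"
  shows "trace_dist A (max_mixed (dim_row A)) = Ts ds (1 / real (dim_row A)) / 2"
proof -
  define n where "n = dim_row A"
  define c where "c = (1 / of_nat n :: complex)"
  have cr: "c = complex_of_real (1 / real n)" unfolding c_def by simp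
  have car: "A \<in> carrier_mat n n" using tri_rep_char(3)[OF tr] unfolding n_def .
  define M where "M = A - c \<cdot>\<^sub>m 1\<^sub>m n"
  have mm: "max_mixed n = c \<cdot>\<^sub>m 1\<^sub>m n" unfolding max_mixed_def c_def by simp
  have trM: "tri_rep M (map (\<lambda>d. d - c) ds)" unfolding M_def n_def by (rule tri_rep_shift[OF tr])
  have hA: "conjugate (A $$ (j,i)) = A $$ (i,j)" if "i < n" "j < n" for i j
  proof -
    have "mat_adjoint A $$ (i,j) = conjugate (A $$ (j,i))" using that car by simp
    then show ?thesis using h by simp
  qed
  have hM: "mat_adjoint M = M"
  proof (rule eq_matI)
    fix i j assume "i < dim_row M" "j < dim_col M"
    hence ij: "i < n" "j < n" using car unfolding M_def by auto
    show "mat_adjoint M $$ (i,j) = M $$ (i,j)"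
      using ij car hA[OF ij] unfolding M_def cr by simp
  qed (use car in \<open>auto simp: M_def\<close>)
  have trMM: "tri_rep (mat_adjoint M * M) (map (\<lambda>d. d*d) (map (\<lambda>d. d - c) ds))"
    unfolding hM by (rule tri_rep_sq[OF trM])
  have "trace_norm M = sum_list (map (\<lambda>m. sqrt (Re m)) (map (\<lambda>d. d*d) (map (\<lambda>d. d - c) ds)))"
    unfolding trace_norm_def by (rule eigvals_sum[OF trMM])
  also have "\<dots> = sum_list (map (\<lambda>l. \<bar>Re l - 1 / real n\<bar>) ds)"
    unfolding map_map comp_def
  proof (rule sum_list_cong')
    fix d assume d: "d \<in> set ds"
    have "Re ((d - c) * (d - c)) = (Re d - 1 / real n)^2" using re[OF d] unfolding cr
      by (simp add: power2_eq_square)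
    then show "sqrt (Re ((d - c) * (d - c))) = \<bar>Re d - 1 / real n\<bar>" by simp
  qed
  finally show ?thesis unfolding trace_dist_def Ts_def n_def[symmetric] mm M_def by simp
qed

lemma ent_lemma: assumes "tri_rep A ds" shows "vn_entropy A = - Hs ds"
proof -
  have "(\<lambda>l. if Re l = 0 then 0 else Re l * log 2 (Re l)) = (\<lambda>l. hf (Re l))"
    by (auto simp: hf_def)
  then show ?thesis unfolding vn_entropy_def Hs_def using eigvals_sum[OF assms] by metis
qed

lemma hf_nonpos: "0 \<le> x \<Longrightarrow> x \<le> 1 \<Longrightarrow> hf x \<le> 0"
  unfolding hf_def by (auto simp: mult_nonneg_nonpos)


theorem mainTheorem6:
  fixes N n :: nat and \<rho> :: "complex mat"
  assumes "N \<ge> 2" and "n \<ge> 1" and "density_matrix N \<rho>"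
  shows "qsc (kron (kron_pow \<rho> n) (kron_pow (max_mixed N) n))
           \<le> real n * ((vn_entropy \<rho> + log 2 (real N)) / (2 * log 2 (real N)))
                 * trace_dist \<rho> (max_mixed N)
      \<and> real n * ((vn_entropy \<rho> + log 2 (real N)) / (2 * log 2 (real N)))
                 * trace_dist \<rho> (max_mixed N)
         = real n * (qsc \<rho> / 2 + trace_dist \<rho> (max_mixed N) / 2)
      \<and> real n * (qsc \<rho> / 2 + trace_dist \<rho> (max_mixed N) / 2)
         \<le> real n * (qsc \<rho> / 2 + 1 / 2)"
proof -
  have N0: "N > 0" using assms(1) by simp
  have car: "\<rho> \<in> carrier_mat N N" and h\<rho>: "mat_adjoint \<rho> = \<rho>" and tr\<rho>: "mat_trace \<rho> = 1"
    using assms(3) unfolding density_matrix_def by auto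
  obtain ds where tr: "tri_rep \<rho> ds" using tri_rep_exists[OF car] by blast
  have lds: "length ds = N" using tri_rep_char(2)[OF tr] car by simp
  have sre: "sum_list (map Re ds) = 1" using trace_tri[OF tr] tr\<rho> sum_list_Re[of ds] by simp
  have pds: "prob ds" unfolding prob_def using dens_eig[OF assms(3) tr] sre by blast
  define es where "es = replicate N (1 / of_nat N :: complex)"
  have tre: "tri_rep (max_mixed N) es" unfolding es_def by (rule tri_rep_mm)
  have ec: "(1 / of_nat N :: complex) = complex_of_real (1 / real N)" by simp
  have pes: "prob es" unfolding prob_def es_def ec using N0 by (simp add: sum_list_replicate)
  have Hes: "Hs es = - log 2 (real N)"
    unfolding Hs_def es_def ec using N0 by (simp add: sum_list_replicate hf_def log_recip)
  define \<sigma> where "\<sigma> = kron (kron_pow \<rho> n) (kron_pow (max_mixed N) n)"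
  define L where "L = kmul (kp ds n) (kp es n)"
  have trs: "tri_rep \<sigma> L" unfolding \<sigma>_def L_def by (intro tri_rep_kron tri_rep_kp tr tre)
  have pL: "prob L" unfolding L_def by (intro prob_kmul prob_kp pds pes)
  have dim\<sigma>: "dim_row \<sigma> = N^n * N^n" using tri_rep_char(2)[OF trs] unfolding L_def
    by (simp add: len_kmul len_kp lds es_def)
  have h\<sigma>: "mat_adjoint \<sigma> = \<sigma>" unfolding \<sigma>_def by (simp add: adj_kron adj_kron_pow h\<rho> adj_max_mixed)
  have reL: "\<And>d. d \<in> set L \<Longrightarrow> Im d = 0" using pL unfolding prob_def by auto
  have reds: "\<And>d. d \<in> set ds \<Longrightarrow> Im d = 0" using pds unfolding prob_def by auto
  have D\<sigma>: "trace_dist \<sigma> (max_mixed (dim_row \<sigma>)) = Ts L (1 / real (dim_row \<sigma>)) / 2"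
    by (rule tn_lemma[OF trs h\<sigma> reL])
  have D\<rho>: "trace_dist \<rho> (max_mixed N) = Ts ds (1 / real N) / 2"
    using tn_lemma[OF tr h\<rho> reds] car by simp
  have S\<sigma>: "vn_entropy \<sigma> = - Hs L" by (rule ent_lemma[OF trs])
  have S\<rho>: "vn_entropy \<rho> = - Hs ds" by (rule ent_lemma[OF tr])
  have HL: "Hs L = real n * Hs ds - real n * log 2 (real N)"
    unfolding L_def using H_kmul[OF prob_kp[OF pds] prob_kp[OF pes]] H_kp[OF pds] H_kp[OF pes] Hes by simp
  have cM: "1 / real (dim_row \<sigma>) = (1 / real N)^n * (1 / real N)^n"
    unfolding dim\<sigma> by (simp add: power_one_over)
  have kpc: "x = complex_of_real ((1 / real N)^n)" if "x \<in> set (kp es n)" for x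
    using kp_const[OF that[unfolded es_def]] by simp
  have T0: "Ts (kp es n) ((1 / real N)^n) = 0" by (rule T_const) (rule kpc)
  have "Ts L (1 / real (dim_row \<sigma>)) \<le> Ts (kp ds n) ((1 / real N)^n) + (1 / real N)^n * real (length (kp ds n)) * Ts (kp es n) ((1 / real N)^n)"
    unfolding cM L_def by (rule T_kmul[OF prob_kp[OF pds] prob_kp[OF pes]]) simp
  also have "\<dots> = Ts (kp ds n) ((1 / real N)^n)" using T0 by simp
  also have "\<dots> \<le> real n * Ts ds (1 / real N)" by (rule T_kp[OF pds lds N0])
  finally have TL: "Ts L (1 / real (dim_row \<sigma>)) \<le> real n * Ts ds (1 / real N)" .
  have LN: "log 2 (real N) > 0" using assms(1) by simp
  have logM: "log 2 (real (dim_row \<sigma>)) = 2 * real n * log 2 (real N)"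
  proof -
    have "real (dim_row \<sigma>) = real N ^ n * real N ^ n" unfolding dim\<sigma> by simp
    moreover have "log 2 (real N ^ n) = real n * log 2 (real N)" by (rule log_nat_power) simp
    moreover have "real N ^ n > 0" using N0 by simp
    ultimately show ?thesis by (simp add: log_mult)
  qed
  have le1: "Re d \<le> 1" if "d \<in> set ds" for d
    using elem_le_sum[OF that, of Re] pds sre unfolding prob_def by auto
  have S0: "0 \<le> vn_entropy \<rho>"
  proof -
    have "Hs ds \<le> 0" unfolding Hs_def
      by (rule sum_list_nonpos) (use pds le1 hf_nonpos in \<open>auto simp: prob_def\<close>)
    then show ?thesis using S\<rho> by simp
  qed
  have T2: "Ts ds (1 / real N) \<le> 2"
  proof -
    have "Ts ds (1 / real N) \<le> sum_list (map (\<lambda>l. Re l + 1 / real N) ds)" unfolding Ts_def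
    proof (rule sum_list_mono)
      fix l assume "l \<in> set ds"
      hence "0 \<le> Re l" using pds by (auto simp: prob_def)
      moreover have "0 \<le> 1 / real N" by simp
      ultimately show "\<bar>Re l - 1 / real N\<bar> \<le> Re l + 1 / real N" by arith
    qed
    also have "\<dots> = 2" using sre lds N0 by (simp add: sum_list_addf sum_list_triv)
    finally show ?thesis .
  qed
  define S where "S = vn_entropy \<rho>"
  define D where "D = trace_dist \<rho> (max_mixed N)"
  define T1 where "T1 = Ts ds (1 / real N)"
  define Tg where "Tg = Ts L (1 / real (dim_row \<sigma>))"
  define l where "l = log 2 (real N)"
  have n0: "real n > 0" using assms(2) by simp
  have qs: "qsc \<sigma> = (S + l) / (4 * l) * Tg"
  proof -
    have "qsc \<sigma> = (real n * S + real n * l) * (Tg / 2) / (2 * real n * l)"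
      unfolding qsc_def Let_def S\<sigma> D\<sigma> logM HL S_def S\<rho> Tg_def l_def by (simp add: algebra_simps)
    also have "\<dots> = (S + l) / (4 * l) * Tg" using n0 LN unfolding l_def by (simp add: field_simps)
    finally show ?thesis .
  qed
  have qr: "qsc \<rho> = S * D / l" unfolding qsc_def Let_def S_def D_def l_def using car by simp
  have k0: "0 \<le> (S + l) / (4 * l)" using S0 LN unfolding S_def l_def by simp
  have "qsc \<sigma> \<le> (S + l) / (4 * l) * (real n * T1)"
    unfolding qs by (rule mult_left_mono[OF _ k0]) (use TL in \<open>simp add: Tg_def T1_def\<close>)
  also have "T1 = 2 * D" using D\<rho> unfolding D_def T1_def by simp
  also have "(S + l) / (4 * l) * (real n * (2 * D)) = real n * ((S + l) / (2 * l)) * D"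
    using LN unfolding l_def[symmetric] by (simp add: field_simps)
  finally have c1: "qsc \<sigma> \<le> real n * ((S + l) / (2 * l)) * D" .
  have c2: "real n * ((S + l) / (2 * l)) * D = real n * (qsc \<rho> / 2 + D / 2)"
    unfolding qr using LN unfolding l_def by (simp add: field_simps)
  have D1: "D \<le> 1" using T2 D\<rho> unfolding D_def by simp
  have c3: "real n * (qsc \<rho> / 2 + D / 2) \<le> real n * (qsc \<rho> / 2 + 1 / 2)"
    using D1 n0 by (intro mult_left_mono) auto
  show ?thesis using c1 c2 c3 unfolding \<sigma>_def S_def D_def l_def by simp
qed

end
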